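(* Let $p\geq5$, let $m_{-1}=0$, $m_0=1$, $m_{n+2}=(p-2)m_{n+1}-m_n$, and write $x=p-2$, $d=p-3$. Then every positive integer $n$ has exactly one representation $n=\sum_{i=0}^k a_i m_i$ with $k\ge 0$ and all $a_i\in\{1,\dots,p-2\}$ such that the word $a_k a_{k-1}\cdots a_0$ contains no factor of the form $x\,d^j\,x$ with $j\ge 0$ (i.e. a digit $p-2$, followed by $j$ digits $p-3$, followed by a digit $p-2$).
   Context: $p\ge5$ is a fixed integer; $m_n$ are the metallic numbers defined by the recurrence in the claim. Words are read with the most significant digit $a_k$ on the left. *)

theory Defs
  imports Main
begin

text \<open>Metallic numbers: m(-1) = 0, m 0 = 1, m (n+2) = (p-2) m (n+1) - m n.
  Index -1 is eliminated: m 1 = (p-2) m 0 - m(-1) = p - 2.\<close>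
fun metal :: "nat \<Rightarrow> nat \<Rightarrow> int" where
  "metal p 0 = 1"
| "metal p (Suc 0) = int p - 2"
| "metal p (Suc (Suc n)) = (int p - 2) * metal p (Suc n) - metal p n"

definition metal_val :: "nat \<Rightarrow> nat list \<Rightarrow> int" where
  "metal_val p ds = (\<Sum>i<length ds. int (ds ! i) * metal p i)"

text \<open>The word w (most significant digit first) contains a factor x d^j x,
  with x = p-2, d = p-3, j >= 0.\<close>
definition has_xdx_factor :: "nat \<Rightarrow> nat list \<Rightarrow> bool" where
  "has_xdx_factor p w = (\<exists>u v j. w = u @ [p - 2] @ replicate j (p - 3) @ [p - 2] @ v)"

end

theory Submission
  imports Defs
begin

definition sx :: "nat \<Rightarrow> nat list \<Rightarrow> bool" where
  "sx p w = (\<exists>j v. w = replicate j (p - 3) @ [p - 2] @ v)"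
definition wval :: "nat \<Rightarrow> nat list \<Rightarrow> int" where
  "wval p w = metal_val p (rev w)"
definition LL :: "nat \<Rightarrow> nat \<Rightarrow> int" where
  "LL p k = (\<Sum>i<k. metal p i)"
definition MM :: "nat \<Rightarrow> nat \<Rightarrow> int" where
  "MM p k = (if k = 0 then 0 else metal p (k - 1))"

lemma wval_Nil[simp]: "wval p [] = 0"
  by (simp add: wval_def metal_val_def)

lemma wval_Cons: "wval p (a # w) = int a * metal p (length w) + wval p w"
  by (simp add: wval_def metal_val_def lessThan_Suc nth_append)

lemma LL_Suc: "LL p (Suc k) = LL p k + metal p k"
  by (simp add: LL_def)

lemma LL_0[simp]: "LL p 0 = 0" by (simp add: LL_def)

lemma MM_Suc[simp]: "MM p (Suc k) = metal p k" by (simp add: MM_def)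

lemma metal_rec: "metal p (Suc k) = (int p - 2) * metal p k - MM p k"
  by (cases k) (auto simp: MM_def)

lemma metal_mono:
  assumes "p \<ge> 5"
  shows "1 \<le> metal p k \<and> metal p k \<le> metal p (Suc k)"
proof (induction k)
  case 0 then show ?case using assms by simp
next
  case (Suc k)
  have "2 * metal p (Suc k) \<le> (int p - 2) * metal p (Suc k)"
    using Suc assms by (intro mult_right_mono) auto
  moreover have "metal p (Suc (Suc k)) = (int p - 2) * metal p (Suc k) - metal p k" by simp
  ultimately show ?case using Suc by linarith
qed

lemma MM_le: "p \<ge> 5 \<Longrightarrow> 0 \<le> MM p k \<and> MM p k \<le> metal p k"
  using metal_mono[of p "k - 1"] metal_mono[of p 0]
  by (cases k) (auto simp: MM_def)

lemma has_Nil: "\<not> has_xdx_factor p []"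
  by (simp add: has_xdx_factor_def)

lemma has_Cons:
  "has_xdx_factor p (a # w) \<longleftrightarrow> has_xdx_factor p w \<or> (a = p - 2 \<and> sx p w)"
proof
  assume "has_xdx_factor p (a # w)"
  then obtain u v j where h: "a # w = u @ [p - 2] @ replicate j (p - 3) @ [p - 2] @ v"
    by (auto simp: has_xdx_factor_def)
  show "has_xdx_factor p w \<or> (a = p - 2 \<and> sx p w)"
  proof (cases u)
    case Nil then show ?thesis using h by (auto simp: sx_def)
  next
    case (Cons b u') then show ?thesis using h by (auto simp: has_xdx_factor_def)
  qed
next
  assume "has_xdx_factor p w \<or> (a = p - 2 \<and> sx p w)"
  then show "has_xdx_factor p (a # w)"
  proof
    assume "has_xdx_factor p w"
    then obtain u v j where "w = u @ [p - 2] @ replicate j (p - 3) @ [p - 2] @ v"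
      by (auto simp: has_xdx_factor_def)
    then have "a # w = (a # u) @ [p - 2] @ replicate j (p - 3) @ [p - 2] @ v" by simp
    then show ?thesis unfolding has_xdx_factor_def by blast
  next
    assume "a = p - 2 \<and> sx p w"
    then obtain j v where "a = p - 2" "w = replicate j (p - 3) @ [p - 2] @ v"
      by (auto simp: sx_def)
    then have "a # w = [] @ [p - 2] @ replicate j (p - 3) @ [p - 2] @ v" by simp
    then show ?thesis unfolding has_xdx_factor_def by blast
  qed
qed

lemma sx_Nil[simp]: "\<not> sx p []" by (simp add: sx_def)

lemma sx_Cons:
  assumes "p \<ge> 5"
  shows "sx p (a # w) \<longleftrightarrow> a = p - 2 \<or> (a = p - 3 \<and> sx p w)"
proof
  assume "sx p (a # w)"
  then obtain j v where h: "a # w = replicate j (p - 3) @ [p - 2] @ v" by (auto simp: sx_def)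
  then show "a = p - 2 \<or> (a = p - 3 \<and> sx p w)"
    by (cases j) (auto simp: sx_def)
next
  assume "a = p - 2 \<or> (a = p - 3 \<and> sx p w)"
  then show "sx p (a # w)"
  proof
    assume "a = p - 2"
    then have "a # w = replicate 0 (p - 3) @ [p - 2] @ w" by simp
    then show ?thesis unfolding sx_def by blast
  next
    assume "a = p - 3 \<and> sx p w"
    then obtain j v where "a = p - 3" "w = replicate j (p - 3) @ [p - 2] @ v"
      by (auto simp: sx_def)
    then have "a # w = replicate (Suc j) (p - 3) @ [p - 2] @ v" by simp
    then show ?thesis unfolding sx_def by blast
  qed
qed

lemma bounds:
  assumes p: "p \<ge> 5"
  shows "set w \<subseteq> {1..p - 2} \<Longrightarrow> \<not> has_xdx_factor p w \<Longrightarrow>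
    LL p (length w) \<le> wval p w \<and> wval p w < LL p (length w) + metal p (length w)
    \<and> (\<not> sx p w \<longrightarrow> wval p w < LL p (length w) + metal p (length w) - MM p (length w))"
proof (induction w)
  case Nil then show ?case by (simp add: MM_def)
next
  case (Cons a r)
  define k where "k = length r"
  define M where "M = metal p k"
  define D where "D = MM p k"
  define q where "q = int p - 2"
  have a1: "1 \<le> a" and aq: "int a \<le> q" using Cons.prems(1) p by (auto simp: q_def)
  have okr: "\<not> has_xdx_factor p r" and nx: "\<not> (a = p - 2 \<and> sx p r)"
    using Cons.prems(2) has_Cons by auto
  have IH: "LL p k \<le> wval p r" "wval p r < LL p k + M" "\<not> sx p r \<longrightarrow> wval p r < LL p k + M - D"
    using Cons.IH Cons.prems(1) okr by (auto simp: k_def M_def D_def)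
  have DM: "0 \<le> D" "D \<le> M" "1 \<le> M" using MM_le[OF p] metal_mono[OF p] by (auto simp: D_def M_def)
  have val: "wval p (a # r) = int a * M + wval p r" by (simp add: wval_Cons k_def M_def)
  have LS: "LL p (length (a # r)) = LL p k + M" by (simp add: LL_Suc k_def M_def)
  have MS: "metal p (length (a # r)) = q * M - D" by (simp add: metal_rec q_def k_def M_def D_def)
  have MMS: "MM p (length (a # r)) = M" by (simp add: k_def M_def)
  have g1: "M \<le> int a * M" proof -
    have "1 * M \<le> int a * M" using a1 DM by (intro mult_right_mono) auto
    then show ?thesis by simp
  qed
  have g2: "int a * M + wval p r < LL p k + M + (q * M - D)"
  proof (cases "int a = q")
    case True
    then have "a = p - 2" using p by (simp add: q_def)
    then have "\<not> sx p r" using nx by auto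
    then show ?thesis using IH True by auto
  next
    case False
    then have "int a * M \<le> (q - 1) * M" using aq DM by (intro mult_right_mono) auto
    then show ?thesis using IH DM by (simp add: algebra_simps)
  qed
  have g3: "\<not> sx p (a # r) \<longrightarrow> int a * M + wval p r < LL p k + M + (q * M - D) - M"
  proof
    assume "\<not> sx p (a # r)"
    then have h: "a \<noteq> p - 2" "a = p - 3 \<longrightarrow> \<not> sx p r" using sx_Cons[OF p] by auto
    show "int a * M + wval p r < LL p k + M + (q * M - D) - M"
    proof (cases "a = p - 3")
      case True
      then have "int a = q - 1" using p by (simp add: q_def)
      then show ?thesis using h True IH by (simp add: algebra_simps)
    next
      case False
      then have "int a \<le> q - 2" using h aq p by (simp add: q_def)
      then have "int a * M \<le> (q - 2) * M" using DM by (intro mult_right_mono) auto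
      then show ?thesis using IH DM by (simp add: algebra_simps)
    qed
  qed
  show ?case unfolding val LS MS MMS using g1 g2 g3 IH by linarith
qed

lemma surj:
  assumes p: "p \<ge> 5"
  shows "(\<forall>v. 0 \<le> v \<and> v < metal p k \<longrightarrow> (\<exists>w. length w = k \<and> set w \<subseteq> {1..p - 2}
            \<and> \<not> has_xdx_factor p w \<and> wval p w = LL p k + v))
       \<and> (\<forall>v. 0 \<le> v \<and> v < metal p k - MM p k \<longrightarrow> (\<exists>w. length w = k \<and> set w \<subseteq> {1..p - 2}
            \<and> \<not> has_xdx_factor p w \<and> \<not> sx p w \<and> wval p w = LL p k + v))"
proof (induction k)
  case 0
  show ?case by (auto simp: MM_def has_Nil intro!: exI[of _ "[]"])
next
  case (Suc k)
  define M where "M = metal p k"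
  define D where "D = MM p k"
  define q where "q = int p - 2"
  have DM: "0 \<le> D" "D \<le> M" "1 \<le> M" using MM_le[OF p] metal_mono[OF p] by (auto simp: D_def M_def)
  have IH1: "\<And>v. 0 \<le> v \<Longrightarrow> v < M \<Longrightarrow> \<exists>w. length w = k \<and> set w \<subseteq> {1..p - 2}
            \<and> \<not> has_xdx_factor p w \<and> wval p w = LL p k + v"
    using Suc.IH by (auto simp: M_def)
  have IH2: "\<And>v. 0 \<le> v \<Longrightarrow> v < M - D \<Longrightarrow> \<exists>w. length w = k \<and> set w \<subseteq> {1..p - 2}
            \<and> \<not> has_xdx_factor p w \<and> \<not> sx p w \<and> wval p w = LL p k + v"
    using Suc.IH by (auto simp: M_def D_def)
  have LS: "LL p (Suc k) = LL p k + M" by (simp add: LL_Suc M_def)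
  have MS: "metal p (Suc k) = q * M - D" by (simp add: metal_rec q_def M_def D_def)
  have MMS: "MM p (Suc k) = M" by (simp add: M_def)
  have valc: "\<And>a r. length r = k \<Longrightarrow> wval p (a # r) = int a * M + wval p r"
    by (simp add: wval_Cons M_def)
  have ext: "\<exists>w. length w = Suc k \<and> set w \<subseteq> {1..p - 2}
            \<and> \<not> has_xdx_factor p w \<and> (b \<longrightarrow> \<not> sx p w) \<and> wval p w = LL p (Suc k) + v"
    if v0: "0 \<le> v" and vlt: "v < q * M - D - (if b then M else 0)" for v b
  proof -
    define t where "t = v div M"
    define r where "r = v mod M"
    have vtr: "v = t * M + r" by (simp add: t_def r_def)
    have r0: "0 \<le> r" "r < M" using DM by (auto simp: r_def)
    have t0: "0 \<le> t" using v0 DM by (simp add: t_def pos_imp_zdiv_nonneg_iff)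
    show ?thesis
    proof (cases "t \<le> q - 2 - (if b then 1 else 0)")
      case True
      obtain w where w: "length w = k" "set w \<subseteq> {1..p - 2}" "\<not> has_xdx_factor p w"
        "wval p w = LL p k + r" using IH1[OF r0] by blast
      define a where "a = nat t + 1"
      have ai: "int a = t + 1" using t0 by (simp add: a_def)
      have a2: "a \<noteq> p - 2" "b \<longrightarrow> a \<noteq> p - 3" using True ai p by (auto simp: q_def split: if_splits)
      have "set (a # w) \<subseteq> {1..p - 2}" proof -
        have "int a \<le> int p - 2" using True ai by (auto simp: q_def split: if_splits)
        then have "a \<le> p - 2" using p by linarith
        then show ?thesis using w(2) by (auto simp: a_def)
      qed
      moreover have "\<not> has_xdx_factor p (a # w)" using w(3) a2 has_Cons by auto
      moreover have "b \<longrightarrow> \<not> sx p (a # w)" using a2 sx_Cons[OF p] by auto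
      moreover have "wval p (a # w) = LL p (Suc k) + v"
        using valc[OF w(1)] w(4) ai vtr LS by (simp add: algebra_simps)
      ultimately show ?thesis using w(1) by (intro exI[of _ "a # w"]) auto
    next
      case False
      define c where "c = q - 1 - (if b then 1 else 0)"
      have tc: "c \<le> t" using False by (auto simp: c_def)
      have "c * M \<le> t * M" using tc DM by (intro mult_right_mono) auto
      then have r'0: "0 \<le> v - c * M" using vtr r0 by linarith
      have r'lt: "v - c * M < M - D" using vlt by (auto simp: c_def algebra_simps split: if_splits)
      obtain w where w: "length w = k" "set w \<subseteq> {1..p - 2}" "\<not> has_xdx_factor p w" "\<not> sx p w"
        "wval p w = LL p k + (v - c * M)" using IH2[OF r'0 r'lt] by blast
      define a where "a = (if b then p - 3 else p - 2)"
      have ai: "int a = c + 1" using p by (auto simp: a_def c_def q_def)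
      have "set (a # w) \<subseteq> {1..p - 2}" using w(2) p by (auto simp: a_def)
      moreover have "\<not> has_xdx_factor p (a # w)" using w(3,4) has_Cons by auto
      moreover have "b \<longrightarrow> \<not> sx p (a # w)" using w(4) sx_Cons[OF p] p by (auto simp: a_def)
      moreover have "wval p (a # w) = LL p (Suc k) + v"
      proof -
        have "wval p (a # w) = (c + 1) * M + wval p w" using valc[OF w(1), of a] ai by simp
        then show ?thesis using w(5) LS by (simp add: algebra_simps)
      qed
      ultimately show ?thesis using w(1) by (intro exI[of _ "a # w"]) auto
    qed
  qed
  show ?case
  proof (intro conjI allI impI)
    fix v assume "0 \<le> v \<and> v < metal p (Suc k)"
    then show "\<exists>w. length w = Suc k \<and> set w \<subseteq> {1..p - 2}
            \<and> \<not> has_xdx_factor p w \<and> wval p w = LL p (Suc k) + v"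
      using ext[of v False] MS by auto
  next
    fix v assume "0 \<le> v \<and> v < metal p (Suc k) - MM p (Suc k)"
    then show "\<exists>w. length w = Suc k \<and> set w \<subseteq> {1..p - 2}
            \<and> \<not> has_xdx_factor p w \<and> \<not> sx p w \<and> wval p w = LL p (Suc k) + v"
      using ext[of v True] MS MMS by auto
  qed
qed

lemma inj:
  assumes p: "p \<ge> 5"
  shows "length w1 = length w2 \<Longrightarrow> set w1 \<subseteq> {1..p - 2} \<Longrightarrow> set w2 \<subseteq> {1..p - 2} \<Longrightarrow>
    \<not> has_xdx_factor p w1 \<Longrightarrow> \<not> has_xdx_factor p w2 \<Longrightarrow> wval p w1 = wval p w2 \<Longrightarrow> w1 = w2"
proof (induction w1 arbitrary: w2)
  case Nil then show ?case by simp
next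
  case (Cons a r1)
  then obtain b r2 where w2: "w2 = b # r2" by (cases w2) auto
  define M where "M = metal p (length r1)"
  have len: "length r2 = length r1" using Cons.prems(1) w2 by simp
  have ok1: "\<not> has_xdx_factor p r1" and ok2: "\<not> has_xdx_factor p r2"
    using Cons.prems(4,5) w2 has_Cons by auto
  have s1: "set r1 \<subseteq> {1..p - 2}" and s2: "set r2 \<subseteq> {1..p - 2}" using Cons.prems(2,3) w2 by auto
  have B1: "LL p (length r1) \<le> wval p r1" "wval p r1 < LL p (length r1) + M"
    using bounds[OF p s1 ok1] by (auto simp: M_def)
  have B2: "LL p (length r1) \<le> wval p r2" "wval p r2 < LL p (length r1) + M"
    using bounds[OF p s2 ok2] len by (auto simp: M_def)
  have M1: "1 \<le> M" using metal_mono[OF p] by (simp add: M_def)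
  have eq: "int a * M + wval p r1 = int b * M + wval p r2"
    using Cons.prems(6) w2 len by (simp add: wval_Cons M_def)
  have "\<not> int a < int b"
  proof
    assume "int a < int b"
    then have "(int a + 1) * M \<le> int b * M" using M1 by (intro mult_right_mono) auto
    then show False using eq B1 B2 by (simp add: algebra_simps)
  qed
  moreover have "\<not> int b < int a"
  proof
    assume "int b < int a"
    then have "(int b + 1) * M \<le> int a * M" using M1 by (intro mult_right_mono) auto
    then show False using eq B1 B2 by (simp add: algebra_simps)
  qed
  ultimately have ab: "a = b" by simp
  then have "wval p r1 = wval p r2" using eq by simp
  then have "r1 = r2" using Cons.IH[OF len[symmetric] s1 s2 ok1 ok2] by simp
  then show ?case using ab w2 by simp
qed

lemma LL_ge: "p \<ge> 5 \<Longrightarrow> int k \<le> LL p k"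
  by (induction k) (use metal_mono in \<open>auto simp: LL_Suc\<close>, smt (verit) metal_mono)

lemma LL_mono: "p \<ge> 5 \<Longrightarrow> i \<le> j \<Longrightarrow> LL p i \<le> LL p j"
  unfolding LL_def using metal_mono[of p]
  by (intro sum_mono2) (auto, smt (verit))

theorem corollary2:
  fixes p n :: nat
  assumes "p \<ge> 5" and "n > 0"
  shows "\<exists>!ds :: nat list. ds \<noteq> [] \<and> set ds \<subseteq> {1..p - 2}
           \<and> \<not> has_xdx_factor p (rev ds) \<and> int n = metal_val p ds"
proof (rule ex_ex1I)
  have p: "p \<ge> 5" using assms by simp
  define k where "k = (LEAST k. int n < LL p (Suc k))"
  have ex: "int n < LL p (Suc n)" using LL_ge[OF p, of "Suc n"] by simp
  have k1: "int n < LL p (Suc k)" unfolding k_def by (rule LeastI[of _ n], rule ex)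
  have k2: "LL p k \<le> int n"
  proof (cases k)
    case 0 then show ?thesis by simp
  next
    case (Suc k')
    then have "k' < k" by simp
    then have "\<not> int n < LL p (Suc k')" unfolding k_def by (rule not_less_Least)
    then show ?thesis using Suc by simp
  qed
  obtain w where w: "length w = k" "set w \<subseteq> {1..p - 2}" "\<not> has_xdx_factor p w"
    "wval p w = LL p k + (int n - LL p k)"
  proof -
    have "0 \<le> int n - LL p k \<and> int n - LL p k < metal p k" using k1 k2 by (simp add: LL_Suc)
    then show ?thesis using that surj[OF p, of k] by blast
  qed
  have "w \<noteq> []"
  proof
    assume "w = []"
    then have "k = 0" using w(1) by simp
    then show False using k1 assms(2) by (simp add: LL_Suc)
  qed
  then show "\<exists>ds. ds \<noteq> [] \<and> set ds \<subseteq> {1..p - 2}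
           \<and> \<not> has_xdx_factor p (rev ds) \<and> int n = metal_val p ds"
    using w by (intro exI[of _ "rev w"]) (auto simp: wval_def)
next
  fix d1 d2 :: "nat list"
  assume A: "d1 \<noteq> [] \<and> set d1 \<subseteq> {1..p - 2} \<and> \<not> has_xdx_factor p (rev d1) \<and> int n = metal_val p d1"
     and B: "d2 \<noteq> [] \<and> set d2 \<subseteq> {1..p - 2} \<and> \<not> has_xdx_factor p (rev d2) \<and> int n = metal_val p d2"
  have p: "p \<ge> 5" using assms by simp
  define w1 where "w1 = rev d1"
  define w2 where "w2 = rev d2"
  have s1: "set w1 \<subseteq> {1..p - 2}" "\<not> has_xdx_factor p w1" "wval p w1 = int n"
    using A by (auto simp: w1_def wval_def)
  have s2: "set w2 \<subseteq> {1..p - 2}" "\<not> has_xdx_factor p w2" "wval p w2 = int n"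
    using B by (auto simp: w2_def wval_def)
  have b1: "LL p (length w1) \<le> int n" "int n < LL p (Suc (length w1))"
    using bounds[OF p s1(1,2)] s1(3) by (auto simp: LL_Suc)
  have b2: "LL p (length w2) \<le> int n" "int n < LL p (Suc (length w2))"
    using bounds[OF p s2(1,2)] s2(3) by (auto simp: LL_Suc)
  have "length w1 = length w2"
  proof (rule ccontr)
    assume "length w1 \<noteq> length w2"
    then have "Suc (length w1) \<le> length w2 \<or> Suc (length w2) \<le> length w1" by linarith
    then show False using LL_mono[OF p] b1 b2 by (meson not_less order_trans)
  qed
  then have "w1 = w2" using inj[OF p _ s1(1) s2(1) s1(2) s2(2)] s1(3) s2(3) by simp
  then show "d1 = d2" by (simp add: w1_def w2_def)
qed

end
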